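(* Among the graphs in $\mathcal{C}_3$, exactly $F_0$ and $F_1(5)$ are comparability graphs; that is, $F_0$ and $F_1(5)$ are comparability graphs, while no even $k$-sun ($k\ge4$ even), no $F_1(k)$ with odd $k\ge7$, and no $F_2(k)$ with odd $k\ge5$ is a comparability graph.
   Context: A comparability graph is a graph admitting a transitive orientation. The graphs (split graphs with clique $C$, independent set $I$, and listed neighbourhoods): $F_0$: $C=\{0,c_1,c_2,c_3,c_4\}$, $I=\{a_1,a_2,a_3\}$, $N(a_1)=\{0,c_2,c_3\}$, $N(a_2)=\{0,c_3,c_4\}$, $N(a_3)=\{0,c_1,c_4\}$. Even $k$-sun ($k\ge4$ even): $C=\{c_1,\dots,c_k\}$, $I=\{a_1,\dots,a_k\}$, $N(a_i)=\{c_i,c_{i+1}\}$ ($1\le i\le k-1$), $N(a_k)=\{c_1,c_k\}$. $F_1(k)$ ($k\ge5$ odd): $C=\{c_1,\dots,c_{k-1}\}$, $I=\{b_1,b_2,a_1,\dots,a_{k-2}\}$, $N(b_1)=\{c_1,\dots,c_{k-2}\}$, $N(b_2)=\{c_2,\dots,c_{k-1}\}$, $N(a_i)=\{c_i,c_{i+1}\}$ ($1\le i\le k-2$). $F_2(k)$ ($k\ge5$ odd): $C=\{c_1,\dots,c_k\}$, $I=\{b,a_1,\dots,a_{k-1}\}$, $N(b)=\{c_2,\dots,c_{k-1}\}$, $N(a_i)=\{c_i,c_{i+1}\}$ ($1\le i\le k-1$). $\mathcal{C}_3$ is the family of all these graphs. *)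

theory Defs
  imports Main
begin

type_synonym 'v graph = "'v set \<times> 'v set set"

definition verts :: "'v graph \<Rightarrow> 'v set" where "verts G = fst G"
definition edges :: "'v graph \<Rightarrow> 'v set set" where "edges G = snd G"

definition transitive_orientation :: "'v graph \<Rightarrow> ('v \<times> 'v) set \<Rightarrow> bool" where
  "transitive_orientation G R \<longleftrightarrow>
     (\<forall>u v. (u, v) \<in> R \<longrightarrow> {u, v} \<in> edges G) \<and>
     (\<forall>u v. {u, v} \<in> edges G \<longrightarrow> u \<noteq> v \<longrightarrow> ((u, v) \<in> R \<longleftrightarrow> (v, u) \<notin> R)) \<and>
     trans R"

definition comparability_graph :: "'v graph \<Rightarrow> bool" where
  "comparability_graph G \<longleftrightarrow> (\<exists>R. transitive_orientation G R)"

datatype vtx = Zero | C nat | A nat | B nat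

definition split_graph :: "vtx set \<Rightarrow> vtx set \<Rightarrow> (vtx \<Rightarrow> vtx set) \<Rightarrow> vtx graph" where
  "split_graph Cl I N =
     (Cl \<union> I,
      {{x, y} | x y. x \<in> Cl \<and> y \<in> Cl \<and> x \<noteq> y} \<union> {{a, c} | a c. a \<in> I \<and> c \<in> N a})"

definition F0 :: "vtx graph" where
  "F0 = split_graph {Zero, C 1, C 2, C 3, C 4} {A 1, A 2, A 3}
     (\<lambda>v. if v = A 1 then {Zero, C 2, C 3}
          else if v = A 2 then {Zero, C 3, C 4}
          else {Zero, C 1, C 4})"

definition even_sun :: "nat \<Rightarrow> vtx graph" where
  "even_sun k = split_graph (C ` {1..k}) (A ` {1..k})
     (\<lambda>v. case v of A i \<Rightarrow> if i < k then {C i, C (i + 1)} else {C 1, C k} | _ \<Rightarrow> {})"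

definition F1 :: "nat \<Rightarrow> vtx graph" where
  "F1 k = split_graph (C ` {1..k - 1}) ({B 1, B 2} \<union> A ` {1..k - 2})
     (\<lambda>v. case v of
        B j \<Rightarrow> if j = 1 then C ` {1..k - 2} else C ` {2..k - 1}
      | A i \<Rightarrow> {C i, C (i + 1)}
      | _ \<Rightarrow> {})"

definition F2 :: "nat \<Rightarrow> vtx graph" where
  "F2 k = split_graph (C ` {1..k}) ({B 0} \<union> A ` {1..k - 1})
     (\<lambda>v. case v of
        B _ \<Rightarrow> C ` {2..k - 1}
      | A i \<Rightarrow> {C i, C (i + 1)}
      | _ \<Rightarrow> {})"

end

theory Submission
  imports Defs
begin

lemma split_edge:
  "{u, v} \<in> edges (split_graph Cl I N) \<longleftrightarrow>
     (u \<in> Cl \<and> v \<in> Cl \<and> u \<noteq> v) \<or> (u \<in> I \<and> v \<in> N u) \<or> (v \<in> I \<and> u \<in> N v)"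
  unfolding split_graph_def edges_def by (auto simp: doubleton_eq_iff)

lemma eqv:
  assumes "transitive_orientation G R" "{x,y} \<in> edges G" "{x,z} \<in> edges G" "{y,z} \<notin> edges G"
    "x \<noteq> y" "x \<noteq> z"
  shows "(x,y) \<in> R \<longleftrightarrow> (x,z) \<in> R"
proof -
  have o: "\<And>u v. {u,v} \<in> edges G \<Longrightarrow> u \<noteq> v \<Longrightarrow> ((u, v) \<in> R \<longleftrightarrow> (v, u) \<notin> R)"
    and r: "\<And>u v. (u,v) \<in> R \<Longrightarrow> {u,v} \<in> edges G" and t: "trans R"
    using assms(1) unfolding transitive_orientation_def by blast+
  have yz: "(y,z) \<notin> R" "(z,y) \<notin> R" using r[of y z] r[of z y] assms(4) by (auto simp: insert_commute)
  show ?thesis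
    using o[OF assms(2,5)] o[OF assms(3,6)] yz t unfolding trans_def by blast
qed

lemma tri:
  assumes "transitive_orientation G R" "{x,y} \<in> edges G" "{x,z} \<in> edges G" "{y,z} \<in> edges G"
    "x \<noteq> y" "x \<noteq> z" "y \<noteq> z"
    "(x,y) \<in> R \<longleftrightarrow> (x,z) \<in> R" "(y,x) \<in> R \<longleftrightarrow> (y,z) \<in> R" "(z,x) \<in> R \<longleftrightarrow> (z,y) \<in> R"
  shows False
proof -
  have o: "\<And>u v. {u,v} \<in> edges G \<Longrightarrow> u \<noteq> v \<Longrightarrow> ((u, v) \<in> R \<longleftrightarrow> (v, u) \<notin> R)"
    using assms(1) unfolding transitive_orientation_def by blast
  show False using o[OF assms(2,5)] o[OF assms(3,6)] o[OF assms(4,7)] assms(8-10) by blast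
qed

lemma sun_bad:
  assumes k: "k \<ge> 4" and T: "transitive_orientation (even_sun k) R"
  shows False
proof -
  let ?G = "even_sun k"
  have E: "\<And>u v. {u,v} \<in> edges ?G \<longleftrightarrow>
     (u \<in> C ` {1..k} \<and> v \<in> C ` {1..k} \<and> u \<noteq> v) \<or>
     (u \<in> A ` {1..k} \<and> v \<in> (case u of A i \<Rightarrow> if i < k then {C i, C (i + 1)} else {C 1, C k} | _ \<Rightarrow> {})) \<or>
     (v \<in> A ` {1..k} \<and> u \<in> (case v of A i \<Rightarrow> if i < k then {C i, C (i + 1)} else {C 1, C k} | _ \<Rightarrow> {}))"
    unfolding even_sun_def by (rule split_edge)
  note e = E[simplified]
  have x: "(C 1, C 2) \<in> R \<longleftrightarrow> (C 1, C 3) \<in> R"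
  proof -
    have "(C 1, A k) \<in> R \<longleftrightarrow> (C 1, C 2) \<in> R" by (rule eqv[OF T]) (use k in \<open>auto simp: e\<close>)
    moreover have "(C 1, A k) \<in> R \<longleftrightarrow> (C 1, C 3) \<in> R" by (rule eqv[OF T]) (use k in \<open>auto simp: e\<close>)
    ultimately show ?thesis by blast
  qed
  have y: "(C 2, C 1) \<in> R \<longleftrightarrow> (C 2, C 3) \<in> R"
  proof -
    have "(C 2, A 1) \<in> R \<longleftrightarrow> (C 2, C 3) \<in> R" by (rule eqv[OF T]) (use k in \<open>auto simp: e\<close>)
    moreover have "(C 2, A 1) \<in> R \<longleftrightarrow> (C 2, C 4) \<in> R" by (rule eqv[OF T]) (use k in \<open>auto simp: e\<close>)
    moreover have "(C 2, A 2) \<in> R \<longleftrightarrow> (C 2, C 1) \<in> R" by (rule eqv[OF T]) (use k in \<open>auto simp: e\<close>)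
    moreover have "(C 2, A 2) \<in> R \<longleftrightarrow> (C 2, C 4) \<in> R" by (rule eqv[OF T]) (use k in \<open>auto simp: e\<close>)
    ultimately show ?thesis by blast
  qed
  have z: "(C 3, C 1) \<in> R \<longleftrightarrow> (C 3, C 2) \<in> R"
  proof -
    have "(C 3, A 3) \<in> R \<longleftrightarrow> (C 3, C 1) \<in> R" by (rule eqv[OF T]) (use k in \<open>auto simp: e\<close>)
    moreover have "(C 3, A 3) \<in> R \<longleftrightarrow> (C 3, C 2) \<in> R" by (rule eqv[OF T]) (use k in \<open>auto simp: e\<close>)
    ultimately show ?thesis by blast
  qed
  show False by (rule tri[OF T _ _ _ _ _ _ x y z]) (use k in \<open>auto simp: e\<close>)
qed


lemma path_bad:
  assumes Cl: "C ` {1..5} \<subseteq> Cl" "Cl \<subseteq> range C" and I: "A ` {1..4} \<subseteq> I" "I \<inter> range C = {}"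
    and N: "\<And>i. i \<in> {1..4} \<Longrightarrow> N (A i) = {C i, C (i+1)}"
    and T: "transitive_orientation (split_graph Cl I N) R"
  shows False
proof -
  have c: "C i \<in> Cl" if "i \<in> {1..5}" for i using Cl that by auto
  have a: "A i \<in> I" if "i \<in> {1..4}" for i using I that by auto
  have nI: "C i \<notin> I" for i using I by auto
  have nC: "A i \<notin> Cl" for i using Cl by auto
  have n1: "N (A 1) = {C 1, C 2}" "N (A 2) = {C 2, C 3}" "N (A 3) = {C 3, C 4}" "N (A 4) = {C 4, C 5}"
    using N by auto
  have n2: "N (A (Suc 0)) = {C (Suc 0), C 2}" using n1(1) by simp
  note e = split_edge c a nI nC n1 n2
  have x: "(C 2, C 3) \<in> R \<longleftrightarrow> (C 2, C 4) \<in> R"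
  proof -
    have "(C 2, A 1) \<in> R \<longleftrightarrow> (C 2, C 3) \<in> R" by (rule eqv[OF T]) (auto simp: e)
    moreover have "(C 2, A 1) \<in> R \<longleftrightarrow> (C 2, C 4) \<in> R" by (rule eqv[OF T]) (auto simp: e)
    ultimately show ?thesis by blast
  qed
  have y: "(C 3, C 2) \<in> R \<longleftrightarrow> (C 3, C 4) \<in> R"
  proof -
    have "(C 3, A 2) \<in> R \<longleftrightarrow> (C 3, C 4) \<in> R" by (rule eqv[OF T]) (auto simp: e)
    moreover have "(C 3, A 2) \<in> R \<longleftrightarrow> (C 3, C 5) \<in> R" by (rule eqv[OF T]) (auto simp: e)
    moreover have "(C 3, A 3) \<in> R \<longleftrightarrow> (C 3, C 2) \<in> R" by (rule eqv[OF T]) (auto simp: e)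
    moreover have "(C 3, A 3) \<in> R \<longleftrightarrow> (C 3, C 5) \<in> R" by (rule eqv[OF T]) (auto simp: e)
    ultimately show ?thesis by blast
  qed
  have z: "(C 4, C 2) \<in> R \<longleftrightarrow> (C 4, C 3) \<in> R"
  proof -
    have "(C 4, A 4) \<in> R \<longleftrightarrow> (C 4, C 2) \<in> R" by (rule eqv[OF T]) (auto simp: e)
    moreover have "(C 4, A 4) \<in> R \<longleftrightarrow> (C 4, C 3) \<in> R" by (rule eqv[OF T]) (auto simp: e)
    ultimately show ?thesis by blast
  qed
  show False by (rule tri[OF T _ _ _ _ _ _ x y z]) (auto simp: e)
qed

lemma F1_bad: assumes "k \<ge> 7" "transitive_orientation (F1 k) R" shows False
  by (rule path_bad[OF _ _ _ _ _ assms(2)[unfolded F1_def]]) (use assms(1) in auto)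

lemma F2_bad: assumes "k \<ge> 5" "transitive_orientation (F2 k) R" shows False
  by (rule path_bad[OF _ _ _ _ _ assms(2)[unfolded F2_def]]) (use assms(1) in auto)



lemma trans_list: "list_all (\<lambda>(x,y). list_all (\<lambda>(y',z). y = y' \<longrightarrow> (x,z) \<in> set xs) xs) xs \<Longrightarrow> trans (set xs)"
  unfolding trans_def list_all_iff by fastforce

lemma TO_check:
  assumes "list_all (\<lambda>(u,v). EE u v) L"
    "list_all (\<lambda>u. list_all (\<lambda>v. EE u v \<longrightarrow> u \<noteq> v \<longrightarrow> ((u,v)\<in>set L \<longleftrightarrow> (v,u)\<notin>set L)) V) V"
    "list_all (\<lambda>(x,y). list_all (\<lambda>(y',z). y = y' \<longrightarrow> (x,z) \<in> set L) L) L"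
    "\<And>u v. {u,v}\<in>edges G \<longleftrightarrow> EE u v" "\<And>u v. EE u v \<Longrightarrow> u\<in>set V \<and> v \<in> set V"
  shows "transitive_orientation G (set L)"
  unfolding transitive_orientation_def
proof (intro conjI allI impI)
  show "trans (set L)" by (rule trans_list[OF assms(3)])
next
  fix u v assume "(u,v) \<in> set L" then show "{u,v} \<in> edges G"
    using assms(1,4) unfolding list_all_iff by auto
next
  fix u v assume "{u,v} \<in> edges G" "u \<noteq> v"
  then show "(u, v) \<in> set L \<longleftrightarrow> (v, u) \<notin> set L"
    using assms(2) assms(4)[of u v] assms(5)[of u v] unfolding list_all_iff by blast
qed

definition L0 :: "(vtx \<times> vtx) list" where "L0 = [(Zero, A 1), (Zero, A 2), (Zero, A 3), (Zero, C 1), (Zero, C 2), (Zero, C 3), (Zero, C 4), (A 1, C 2), (A 1, C 3), (A 2, C 3), (C 1, A 3), (C 1, C 2), (C 1, C 3), (C 2, C 3), (C 4, A 2), (C 4, A 3), (C 4, C 1), (C 4, C 2), (C 4, C 3)]"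
definition L1 :: "(vtx \<times> vtx) list" where "L1 = [(A 1, C 1), (A 1, C 2), (A 2, C 2), (B 1, C 1), (B 1, C 2), (B 2, C 2), (C 1, C 2), (C 3, A 2), (C 3, A 3), (C 3, B 1), (C 3, B 2), (C 3, C 1), (C 3, C 2), (C 3, C 4), (C 4, A 3), (C 4, B 2), (C 4, C 1), (C 4, C 2)]"

definition EE0 where "EE0 u v = ((u \<in> {Zero, C 1, C 2, C 3, C 4} \<and> v \<in> {Zero, C 1, C 2, C 3, C 4} \<and> u \<noteq> v) \<or>
     (u \<in> {A 1, A 2, A 3} \<and> v \<in> (\<lambda>v. if v = A 1 then {Zero, C 2, C 3}
          else if v = A 2 then {Zero, C 3, C 4}
          else {Zero, C 1, C 4}) u) \<or>
     (v \<in> {A 1, A 2, A 3} \<and> u \<in> (\<lambda>v. if v = A 1 then {Zero, C 2, C 3}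
          else if v = A 2 then {Zero, C 3, C 4}
          else {Zero, C 1, C 4}) v))"

lemma F0_ok: "comparability_graph F0"
  unfolding comparability_graph_def
proof (rule exI[of _ "set L0"])
  show "transitive_orientation F0 (set L0)"
  proof (rule TO_check[where EE = EE0 and V = "[Zero, C 1, C 2, C 3, C 4, A 1, A 2, A 3]"])
    show "list_all (\<lambda>(u,v). EE0 u v) L0" unfolding L0_def EE0_def by code_simp
    show "list_all (\<lambda>u. list_all (\<lambda>v. EE0 u v \<longrightarrow> u \<noteq> v \<longrightarrow> ((u,v)\<in>set L0 \<longleftrightarrow> (v,u)\<notin>set L0))
      [Zero, C 1, C 2, C 3, C 4, A 1, A 2, A 3]) [Zero, C 1, C 2, C 3, C 4, A 1, A 2, A 3]"
      unfolding L0_def EE0_def by code_simp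
    show "list_all (\<lambda>(x,y). list_all (\<lambda>(y',z). y = y' \<longrightarrow> (x,z) \<in> set L0) L0) L0"
      unfolding L0_def by code_simp
    show "{u,v}\<in>edges F0 \<longleftrightarrow> EE0 u v" for u v unfolding F0_def split_edge EE0_def ..
    show "u\<in>set [Zero, C 1, C 2, C 3, C 4, A 1, A 2, A 3] \<and> v \<in> set [Zero, C 1, C 2, C 3, C 4, A 1, A 2, A 3]"
      if "EE0 u v" for u v using that unfolding EE0_def by (auto split: if_splits)
  qed
qed

definition N1 :: "vtx \<Rightarrow> vtx set" where "N1 v = (case v of
        B j \<Rightarrow> if j = 1 then {C 1, C 2, C 3} else {C 2, C 3, C 4}
      | A i \<Rightarrow> {C i, C (i + 1)}
      | _ \<Rightarrow> {})"

definition EE1 where "EE1 u v = ((u \<in> {C 1, C 2, C 3, C 4} \<and> v \<in> {C 1, C 2, C 3, C 4} \<and> u \<noteq> v) \<or>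
     (u \<in> {B 1, B 2, A 1, A 2, A 3} \<and> v \<in> N1 u) \<or>
     (v \<in> {B 1, B 2, A 1, A 2, A 3} \<and> u \<in> N1 v))"

lemma F1_ok: "comparability_graph (F1 5)"
  unfolding comparability_graph_def
proof (rule exI[of _ "set L1"])
  let ?V = "[C 1, C 2, C 3, C 4, B 1, B 2, A 1, A 2, A 3]"
  show "transitive_orientation (F1 5) (set L1)"
  proof (rule TO_check[where EE = EE1 and V = ?V])
    show "list_all (\<lambda>(u,v). EE1 u v) L1" unfolding L1_def EE1_def N1_def by code_simp
    show "list_all (\<lambda>u. list_all (\<lambda>v. EE1 u v \<longrightarrow> u \<noteq> v \<longrightarrow> ((u,v)\<in>set L1 \<longleftrightarrow> (v,u)\<notin>set L1))
      ?V) ?V"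
      unfolding L1_def EE1_def N1_def by code_simp
    show "list_all (\<lambda>(x,y). list_all (\<lambda>(y',z). y = y' \<longrightarrow> (x,z) \<in> set L1) L1) L1"
      unfolding L1_def by code_simp
    have e: "C ` {1..5 - 1} = {C 1, C 2, C 3, C 4}" "C ` {1..5 - 2} = {C 1, C 2, C 3}"
     "C ` {2..5 - 1} = {C 2, C 3, C 4}" "A ` {1..5 - 2} = {A 1, A 2, A 3}" by auto
    have n: "(\<lambda>v. case v of
        B j \<Rightarrow> if j = 1 then C ` {1..5 - 2} else C ` {2..5 - 1}
      | A i \<Rightarrow> {C i, C (i + 1)}
      | _ \<Rightarrow> {}) = N1" unfolding N1_def e by (rule ext) (simp split: vtx.split)
    show "{u,v}\<in>edges (F1 5) \<longleftrightarrow> EE1 u v" for u v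
      unfolding F1_def split_edge EE1_def e N1_def by auto
    show "u\<in>set ?V \<and> v \<in> set ?V"
      if "EE1 u v" for u v using that unfolding EE1_def N1_def by (auto split: if_splits vtx.splits)
  qed
qed

theorem theorem7:
  shows "comparability_graph F0 \<and> comparability_graph (F1 5) \<and>
    (\<forall>k. k \<ge> 4 \<and> even k \<longrightarrow> \<not> comparability_graph (even_sun k)) \<and>
    (\<forall>k. k \<ge> 7 \<and> odd k \<longrightarrow> \<not> comparability_graph (F1 k)) \<and>
    (\<forall>k. k \<ge> 5 \<and> odd k \<longrightarrow> \<not> comparability_graph (F2 k))"
  unfolding comparability_graph_def using F0_ok F1_ok sun_bad F1_bad F2_bad
  unfolding comparability_graph_def by blast

end
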